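(* If $R$ is a 2-primal ring, then $\beta(R)=\mathcal N(R)=E_R(0)=\beta_{co}(R)$.
   Context: Rings are associative with identity. $\beta(R)$ is the prime radical (intersection of all prime ideals), $\beta_{co}(R)$ the intersection of all completely prime ideals (an ideal $P$ is completely prime if $ab\in P$ implies $a\in P$ or $b\in P$), $\mathcal N(R)$ the set of nilpotent elements. $R$ is 2-primal if $\mathcal N(R)=\beta(R)$. $E_R(0)=\{ab: a,b\in R, a^kb=0\text{ for some }k\in\mathbb N\}$. *)

theory Defs
  imports Main
begin

text \<open>Rings: type class ring_1 (associative, with identity, not necessarily commutative).
  The ring R is the whole carrier UNIV of the type.\<close>

definition is_ideal :: "'a::ring_1 set \<Rightarrow> bool" where
  "is_ideal I \<longleftrightarrow> 0 \<in> I \<and> (\<forall>x\<in>I. \<forall>y\<in>I. x + y \<in> I) \<and> (\<forall>x\<in>I. - x \<in> I)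
     \<and> (\<forall>x\<in>I. \<forall>r. r * x \<in> I \<and> x * r \<in> I)"

text \<open>Prime ideal: proper ideal P such that for ideals A, B, AB \<subseteq> P implies A \<subseteq> P or B \<subseteq> P
  (AB \<subseteq> P unfolded as: all products a*b with a in A, b in B lie in P, since P is additively closed).\<close>
definition prime_ideal :: "'a::ring_1 set \<Rightarrow> bool" where
  "prime_ideal P \<longleftrightarrow> is_ideal P \<and> P \<noteq> UNIV \<and>
     (\<forall>A B. is_ideal A \<longrightarrow> is_ideal B \<longrightarrow> (\<forall>a\<in>A. \<forall>b\<in>B. a * b \<in> P) \<longrightarrow> A \<subseteq> P \<or> B \<subseteq> P)"

definition completely_prime_ideal :: "'a::ring_1 set \<Rightarrow> bool" where
  "completely_prime_ideal P \<longleftrightarrow> is_ideal P \<and> P \<noteq> UNIV \<and>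
     (\<forall>a b. a * b \<in> P \<longrightarrow> a \<in> P \<or> b \<in> P)"

definition prime_radical :: "'a::ring_1 set" where
  "prime_radical = \<Inter> {P. prime_ideal P}"

definition co_radical :: "'a::ring_1 set" where
  "co_radical = \<Inter> {P. completely_prime_ideal P}"

definition nilpotents :: "'a::ring_1 set" where
  "nilpotents = {x. \<exists>n::nat. x ^ n = 0}"

definition E_zero :: "'a::ring_1 set" where
  "E_zero = {a * b | a b. \<exists>k::nat. k \<ge> 1 \<and> a ^ k * b = 0}"

definition two_primal :: "'a::ring_1 itself \<Rightarrow> bool" where
  "two_primal _ \<longleftrightarrow> (nilpotents :: 'a set) = prime_radical"

end

theory Submission
  imports Defs
begin

definition FF :: "'a::ring_1 \<Rightarrow> 'a set set" where
  "FF x = {I. is_ideal I \<and> (\<forall>n. x ^ n \<notin> I) \<and> (\<forall>a b r. a * b \<in> I \<longrightarrow> a * r * b \<in> I)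
             \<and> (\<forall>a. a * a \<in> I \<longrightarrow> a \<in> I)}"

lemma FF_D: "I \<in> FF x \<Longrightarrow> is_ideal I \<and> (\<forall>n. x ^ n \<notin> I) \<and> (\<forall>a b r. a * b \<in> I \<longrightarrow> a * r * b \<in> I)
             \<and> (\<forall>a. a * a \<in> I \<longrightarrow> a \<in> I)" unfolding FF_def by (rule CollectD)
lemma FF_id: "I \<in> FF x \<Longrightarrow> is_ideal I" by (drule FF_D) (elim conjE)
lemma FF_pow: "I \<in> FF x \<Longrightarrow> x ^ n \<notin> I" by (drule FF_D) (elim conjE, erule allE[where x=n])
lemma FF_sq: "I \<in> FF x \<Longrightarrow> a * a \<in> I \<Longrightarrow> a \<in> I" by (drule FF_D) (elim conjE, erule allE[where x=a], erule mp)
lemma FF_ifp: "I \<in> FF x \<Longrightarrow> a * b \<in> I \<Longrightarrow> a * r * b \<in> I" by (drule FF_D) (elim conjE, erule allE[where x=a], erule allE[where x=b], erule allE[where x=r], erule mp)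
lemma idl_0: "is_ideal I \<Longrightarrow> 0 \<in> I" unfolding is_ideal_def by simp
lemma idl_add: "is_ideal I \<Longrightarrow> x \<in> I \<Longrightarrow> y \<in> I \<Longrightarrow> x + y \<in> I" unfolding is_ideal_def by simp
lemma idl_neg: "is_ideal I \<Longrightarrow> x \<in> I \<Longrightarrow> - x \<in> I" unfolding is_ideal_def by simp
lemma idl_ml: "is_ideal I \<Longrightarrow> x \<in> I \<Longrightarrow> r * x \<in> I" unfolding is_ideal_def by simp
lemma idl_mr: "is_ideal I \<Longrightarrow> x \<in> I \<Longrightarrow> x * r \<in> I" unfolding is_ideal_def by simp

lemma FF_swap:
  assumes "I \<in> FF x" "a * b \<in> I" shows "b * a \<in> I"
proof -
  have "b * (a * b) * a \<in> I" using idl_ml[OF FF_id[OF assms(1)] idl_mr[OF FF_id[OF assms(1)] assms(2)]]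
    by (simp add: mult.assoc)
  hence "(b * a) * (b * a) \<in> I" by (simp add: mult.assoc)
  thus ?thesis by (rule FF_sq[OF assms(1)])
qed

lemma FF_Q:
  assumes I: "I \<in> FF x" and nc: "\<forall>n. c * x ^ n \<notin> I"
  shows "{y. c * y \<in> I} \<in> FF x"
proof -
  have id: "is_ideal I" by (rule FF_id[OF I])
  have ifp: "\<And>a b r. a * b \<in> I \<Longrightarrow> a * r * b \<in> I" by (rule FF_ifp[OF I])
  have sp: "\<And>a. a * a \<in> I \<Longrightarrow> a \<in> I" by (rule FF_sq[OF I])
  have "is_ideal {y. c * y \<in> I}"
    unfolding is_ideal_def
  proof (intro conjI ballI allI)
    show "0 \<in> {y. c * y \<in> I}" using id unfolding is_ideal_def by simp
  next
    fix y z assume "y \<in> {y. c * y \<in> I}" "z \<in> {y. c * y \<in> I}"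
    thus "y + z \<in> {y. c * y \<in> I}" using id unfolding is_ideal_def by (simp add: distrib_left)
  next
    fix y assume "y \<in> {y. c * y \<in> I}"
    thus "- y \<in> {y. c * y \<in> I}" using id unfolding is_ideal_def by simp
  next
    fix y r assume "y \<in> {y. c * y \<in> I}"
    hence cy: "c * y \<in> I" by simp
    show "r * y \<in> {y. c * y \<in> I}" using ifp[OF cy, of r] by (simp add: mult.assoc)
  next
    fix y r assume "y \<in> {y. c * y \<in> I}"
    hence cy: "c * y \<in> I" by simp
    have "(c * y) * r \<in> I" using cy id unfolding is_ideal_def by blast
    thus "y * r \<in> {y. c * y \<in> I}" by (simp add: mult.assoc)
  qed
  moreover have "\<forall>n. x ^ n \<notin> {y. c * y \<in> I}" using nc by simp
  moreover have "\<forall>a b r. a * b \<in> {y. c * y \<in> I} \<longrightarrow> a * r * b \<in> {y. c * y \<in> I}"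
  proof (intro allI impI)
    fix a b r assume "a * b \<in> {y. c * y \<in> I}"
    hence "(c * a) * b \<in> I" by (simp add: mult.assoc)
    from ifp[OF this, of r] show "a * r * b \<in> {y. c * y \<in> I}" by (simp add: mult.assoc)
  qed
  moreover have "\<forall>a. a * a \<in> {y. c * y \<in> I} \<longrightarrow> a \<in> {y. c * y \<in> I}"
  proof (intro allI impI)
    fix a assume "a * a \<in> {y. c * y \<in> I}"
    hence "(c * a) * a \<in> I" by (simp add: mult.assoc)
    from ifp[OF this, of c] have "(c * a) * (c * a) \<in> I" by (simp add: mult.assoc)
    hence "c * a \<in> I" by (rule sp)
    thus "a \<in> {y. c * y \<in> I}" by simp
  qed
  ultimately show ?thesis unfolding FF_def by (intro CollectI conjI)
qed

lemma FF_sub: "I \<in> FF x \<Longrightarrow> I \<subseteq> {y. c * y \<in> I}"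
  using idl_ml[OF FF_id] by blast

lemma FF_max_cp:
  assumes P: "P \<in> FF x" and mx: "\<forall>X\<in>FF x. P \<subseteq> X \<longrightarrow> X = P"
  shows "completely_prime_ideal P"
proof -
  have id: "is_ideal P" and nx: "\<And>n. x ^ n \<notin> P" using FF_id[OF P] FF_pow[OF P] by auto
  have ne: "P \<noteq> UNIV" using nx[of 0] by auto
  have "\<forall>a b. a * b \<in> P \<longrightarrow> a \<in> P \<or> b \<in> P"
  proof (intro allI impI)
    fix a b assume ab: "a * b \<in> P"
    show "a \<in> P \<or> b \<in> P"
    proof (cases "\<forall>n. a * x ^ n \<notin> P")
      case True
      from FF_Q[OF P True] FF_sub[OF P] mx have "{y. a * y \<in> P} = P" by blast
      thus ?thesis using ab by blast
    next
      case False
      then obtain n where "a * x ^ n \<in> P" by blast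
      hence xa: "x ^ n * a \<in> P" using FF_swap[OF P] by blast
      have "\<forall>m. x ^ n * x ^ m \<notin> P" using nx by (simp add: power_add[symmetric])
      from FF_Q[OF P this] FF_sub[OF P] mx have "{y. x ^ n * y \<in> P} = P" by blast
      thus ?thesis using xa by blast
    qed
  qed
  thus ?thesis using id ne unfolding completely_prime_ideal_def by blast
qed

lemma FF_chain:
  assumes "C \<noteq> {}" "subset.chain (FF x) C"
  shows "\<Union>C \<in> FF x"
proof -
  have CF: "C \<subseteq> FF x" and lin: "\<And>I J. I \<in> C \<Longrightarrow> J \<in> C \<Longrightarrow> I \<subseteq> J \<or> J \<subseteq> I"
    using assms(2) unfolding subset.chain_def by blast+
  have mF: "\<And>I. I \<in> C \<Longrightarrow> I \<in> FF x" using CF by blast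
  have m1: "\<And>I. I \<in> C \<Longrightarrow> is_ideal I" by (rule FF_id[OF mF])
  have m2: "\<And>I n. I \<in> C \<Longrightarrow> x ^ n \<notin> I" by (rule FF_pow[OF mF])
  have m3: "\<And>I a b r. I \<in> C \<Longrightarrow> a * b \<in> I \<Longrightarrow> a * r * b \<in> I" by (rule FF_ifp[OF mF])
  have m4: "\<And>I a. I \<in> C \<Longrightarrow> a * a \<in> I \<Longrightarrow> a \<in> I" by (rule FF_sq[OF mF])
  have i0: "\<And>I. I \<in> C \<Longrightarrow> 0 \<in> I" by (rule idl_0[OF m1])
  have iadd: "\<And>I y z. I \<in> C \<Longrightarrow> y \<in> I \<Longrightarrow> z \<in> I \<Longrightarrow> y + z \<in> I" by (rule idl_add[OF m1])
  have ineg: "\<And>I y. I \<in> C \<Longrightarrow> y \<in> I \<Longrightarrow> - y \<in> I" by (rule idl_neg[OF m1])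
  have iml: "\<And>I y r. I \<in> C \<Longrightarrow> y \<in> I \<Longrightarrow> r * y \<in> I" by (rule idl_ml[OF m1])
  have imr: "\<And>I y r. I \<in> C \<Longrightarrow> y \<in> I \<Longrightarrow> y * r \<in> I" by (rule idl_mr[OF m1])
  have "is_ideal (\<Union>C)"
    unfolding is_ideal_def
  proof (intro conjI ballI allI)
    obtain I where "I \<in> C" using assms(1) by blast
    thus "0 \<in> \<Union>C" using i0 by blast
  next
    fix y z assume "y \<in> \<Union>C" "z \<in> \<Union>C"
    then obtain I J where IJ: "I \<in> C" "J \<in> C" "y \<in> I" "z \<in> J" by blast
    from lin[OF IJ(1,2)] show "y + z \<in> \<Union>C"
    proof
      assume "I \<subseteq> J"
      hence "y + z \<in> J" using iadd[OF IJ(2)] IJ by blast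
      thus ?thesis using IJ by blast
    next
      assume "J \<subseteq> I"
      hence "y + z \<in> I" using iadd[OF IJ(1)] IJ by blast
      thus ?thesis using IJ by blast
    qed
  next
    fix y assume "y \<in> \<Union>C" thus "- y \<in> \<Union>C" using ineg by blast
  next
    fix y r assume "y \<in> \<Union>C" thus "r * y \<in> \<Union>C" using iml by blast
  next
    fix y r assume "y \<in> \<Union>C" thus "y * r \<in> \<Union>C" using imr by blast
  qed
  moreover have "\<forall>n. x ^ n \<notin> \<Union>C" using m2 by blast
  moreover have "\<forall>a b r. a * b \<in> \<Union>C \<longrightarrow> a * r * b \<in> \<Union>C"
  proof (intro allI impI)
    fix a b r assume "a * b \<in> \<Union>C"
    then obtain I where "I \<in> C" "a * b \<in> I" by (rule UnionE)
    thus "a * r * b \<in> \<Union>C" using m3[OF \<open>I \<in> C\<close> \<open>a * b \<in> I\<close>] by (rule_tac UnionI)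
  qed
  moreover have "\<forall>a. a * a \<in> \<Union>C \<longrightarrow> a \<in> \<Union>C"
  proof (intro allI impI)
    fix a assume "a * a \<in> \<Union>C"
    then obtain I where "I \<in> C" "a * a \<in> I" by (rule UnionE)
    thus "a \<in> \<Union>C" using m4[OF \<open>I \<in> C\<close> \<open>a * a \<in> I\<close>] by (rule_tac UnionI)
  qed
  ultimately show ?thesis unfolding FF_def by (intro CollectI conjI)
qed

lemma nil_pow: "x ^ n \<in> (nilpotents :: 'a::ring_1 set) \<Longrightarrow> x \<in> nilpotents"
  unfolding nilpotents_def by (auto simp: power_mult[symmetric])

lemma inter_ideal: "\<forall>I\<in>S. is_ideal I \<Longrightarrow> is_ideal (\<Inter>S :: 'a::ring_1 set)"
  unfolding is_ideal_def by (intro conjI ballI allI) (simp_all add: InterI)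

lemma N_in_FF:
  assumes tp: "two_primal TYPE('a::ring_1)" and x: "(x::'a) \<notin> nilpotents"
  shows "nilpotents \<in> FF x"
proof -
  have "is_ideal (\<Inter>{P. prime_ideal P} :: 'a set)"
    by (rule inter_ideal) (simp add: prime_ideal_def)
  hence id: "is_ideal (nilpotents :: 'a set)"
    using tp unfolding two_primal_def prime_radical_def by simp
  have sw: "b * a \<in> nilpotents" if h: "a * b \<in> (nilpotents :: 'a set)" for a b :: 'a
  proof -
    obtain n where n: "(a * b) ^ n = 0" using h unfolding nilpotents_def by blast
    have "(b * a) ^ Suc m = b * (a * b) ^ m * a" for m
    proof (induction m)
      case 0 show ?case by simp
    next
      case (Suc m)
      have "(b * a) ^ Suc (Suc m) = (b * a) * (b * a) ^ Suc m" by (rule power_Suc)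
      also have "\<dots> = (b * a) * (b * (a * b) ^ m * a)" by (simp only: Suc)
      also have "\<dots> = b * ((a * b) * (a * b) ^ m) * a" by (simp only: mult.assoc)
      also have "\<dots> = b * (a * b) ^ Suc m * a" by (simp only: power_Suc)
      finally show ?case .
    qed
    hence "(b * a) ^ Suc n = 0" using n by simp
    thus ?thesis unfolding nilpotents_def by blast
  qed
  have sq: "a \<in> nilpotents" if "a * a \<in> (nilpotents :: 'a set)" for a :: 'a
    using that nil_pow[of a 2] by (simp add: power2_eq_square)
  have "\<forall>a b r. a * b \<in> nilpotents \<longrightarrow> a * r * b \<in> (nilpotents :: 'a set)"
  proof (intro allI impI)
    fix a b r :: 'a assume "a * b \<in> nilpotents"
    hence "b * a \<in> nilpotents" by (rule sw)
    hence "(a * r) * (b * a) * (r * b) \<in> nilpotents" by (rule idl_mr[OF id idl_ml[OF id]])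
    hence "(a * r * b) * (a * r * b) \<in> nilpotents" by (simp add: mult.assoc)
    thus "a * r * b \<in> nilpotents" by (rule sq)
  qed
  moreover have "\<forall>n. x ^ n \<notin> nilpotents" using x nil_pow by blast
  moreover have "\<forall>a. a * a \<in> nilpotents \<longrightarrow> a \<in> (nilpotents :: 'a set)" by (intro allI impI) (rule sq)
  ultimately show ?thesis using id unfolding FF_def by (intro CollectI conjI)
qed

theorem corollary4p5:
  assumes "two_primal TYPE('a::ring_1)"
  shows "(prime_radical :: 'a set) = nilpotents \<and> (nilpotents :: 'a set) = E_zero
         \<and> (E_zero :: 'a set) = co_radical"
proof -
  have NE: "(nilpotents :: 'a set) \<subseteq> E_zero"
  proof
    fix x :: 'a assume "x \<in> nilpotents"
    then obtain n where n: "x ^ n = 0" unfolding nilpotents_def by blast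
    have "x ^ Suc n * 1 = 0" using n by simp
    hence "\<exists>k::nat. k \<ge> 1 \<and> x ^ k * 1 = 0" by (intro exI[of _ "Suc n"]) simp
    hence "x * 1 \<in> E_zero" unfolding E_zero_def by blast
    thus "x \<in> E_zero" by simp
  qed
  have cp_pow: "a \<in> P" if "completely_prime_ideal P" "a ^ k \<in> P" "k \<ge> 1" for P :: "'a set" and a :: 'a and k
    using that(2,3)
  proof (induction k)
    case 0 thus ?case by simp
  next
    case (Suc k)
    show ?case
    proof (cases "k = 0")
      case True thus ?thesis using Suc by simp
    next
      case False
      have "a * a ^ k \<in> P" using Suc.prems by simp
      hence "a \<in> P \<or> a ^ k \<in> P" using that(1) unfolding completely_prime_ideal_def by blast
      thus ?thesis using Suc False by auto
    qed
  qed
  have EC: "(E_zero :: 'a set) \<subseteq> co_radical"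
  proof
    fix y :: 'a assume "y \<in> E_zero"
    then obtain a b k where y: "y = a * b" and k: "k \<ge> 1" "a ^ k * b = 0"
      unfolding E_zero_def by blast
    show "y \<in> co_radical" unfolding co_radical_def
    proof
      fix P :: "'a set" assume "P \<in> {P. completely_prime_ideal P}"
      hence P: "completely_prime_ideal P" by simp
      hence id: "is_ideal P" unfolding completely_prime_ideal_def by blast
      have "a ^ k * b \<in> P" using k id unfolding is_ideal_def by simp
      hence "a ^ k \<in> P \<or> b \<in> P" using P unfolding completely_prime_ideal_def by blast
      hence "a \<in> P \<or> b \<in> P" using cp_pow[OF P _ k(1)] by blast
      thus "y \<in> P" using y id unfolding is_ideal_def by blast
    qed
  qed
  have CN: "(co_radical :: 'a set) \<subseteq> nilpotents"
  proof
    fix x :: 'a assume xc: "x \<in> co_radical"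
    show "x \<in> nilpotents"
    proof (rule ccontr)
      assume xn: "x \<notin> nilpotents"
      have "FF x \<noteq> {}" using N_in_FF[OF assms xn] by blast
      from subset_Zorn_nonempty[OF this FF_chain]
      obtain P where P: "P \<in> FF x" and mx: "\<forall>X\<in>FF x. P \<subseteq> X \<longrightarrow> X = P" by blast
      have "completely_prime_ideal P" by (rule FF_max_cp[OF P mx])
      hence "x \<in> P" using xc unfolding co_radical_def by blast
      moreover have "x ^ 1 \<notin> P" by (rule FF_pow[OF P])
      ultimately show False by simp
    qed
  qed
  have "(prime_radical :: 'a set) = nilpotents" using assms unfolding two_primal_def by simp
  moreover have "(nilpotents :: 'a set) = E_zero" using NE EC CN by (rule_tac equalityI) auto
  moreover have "(E_zero :: 'a set) = co_radical" using NE EC CN by (rule_tac equalityI) auto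
  ultimately show ?thesis by (intro conjI)
qed

end
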